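(* Let $\mathbb{F}$ be a finite field and $n\ge2$. Let $j_1,\dots,j_{n-1}\in\{1,\dots,n\}$ be pairwise different and $d_1,\dots,d_{n-1}\in\mathbb{N}_0$ be such that $j_i<i$ implies $d_i>0$. Then there exists a basic matrix $M=(m_{ij})\in\mathbb{F}[t]^{(n-1)\times n}$ with the following properties, for all $i=1,\dots,n-1$: (i) $\deg m_{ij}\le d_i$ for $j<j_i$; (ii) $\deg m_{ij}=d_i$ for $j=j_i$; (iii) $\deg m_{ij}<d_i$ for $j>j_i$; (iv) $m_{ii}(0)=1$; (v) $m_{ij}(0)=0$ for $j<i$.
   Context: A matrix $M\in\mathbb{F}[t]^{k\times n}$ is basic if $\mathrm{rank}\,M(\lambda)=k$ for all $\lambda$ in an algebraic closure of $\mathbb{F}$, equivalently its $k\times k$ minors are coprime. $\deg 0=-\infty$. *)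

theory Defs
  imports "HOL-Computational_Algebra.Polynomial"
    "Jordan_Normal_Form.Determinant" "Jordan_Normal_Form.DL_Submatrix"
begin

definition basic_mat :: "'a::comm_ring_1 mat \<Rightarrow> bool" where
  "basic_mat M \<longleftrightarrow>
     (\<forall>p. (\<forall>J. J \<subseteq> {..<dim_col M} \<and> card J = dim_row M \<longrightarrow>
               p dvd det (submatrix M {..<dim_row M} J)) \<longrightarrow> p dvd 1)"

end

theory Submission
  imports Defs "HOL-Library.Product_Lexorder"
begin

lemma det_single_perm:
  fixes A :: "'a::comm_ring_1 mat" and w :: "nat \<Rightarrow> 'b::linorder"
  assumes A: "A \<in> carrier_mat m m"
    and p0: "p0 permutes {0..<m}"
    and le: "\<And>i k. i < m \<Longrightarrow> k < m \<Longrightarrow> A $$ (i,k) \<noteq> 0 \<Longrightarrow> w k \<le> w (p0 i)"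
    and eq: "\<And>i k. i < m \<Longrightarrow> k < m \<Longrightarrow> A $$ (i,k) \<noteq> 0 \<Longrightarrow> w k = w (p0 i) \<Longrightarrow> k = p0 i"
  shows "det A = signof p0 * (\<Prod>i = 0..<m. A $$ (i, p0 i))"
proof -
  let ?U = "{0..<m}"
  let ?PU = "{p. p permutes ?U}"
  let ?pp = "\<lambda>p. signof p * (\<Prod> i = 0 ..< m. A $$ (i, p i))"
  have zero: "?pp p = 0" if p: "p permutes ?U" and ne: "p \<noteq> p0" for p
  proof -
    have "\<exists>i\<in>?U. A $$ (i, p i) = 0"
    proof (rule ccontr)
      assume "\<not> ?thesis"
      hence nz: "\<And>i. i < m \<Longrightarrow> A $$ (i, p i) \<noteq> 0" by auto
      define S where "S = {i\<in>?U. p i \<noteq> p0 i}"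
      have "S \<noteq> {}"
      proof
        assume "S = {}"
        have "p x = p0 x" for x
        proof (cases "x < m")
          case True
          have "x \<notin> S" using \<open>S = {}\<close> by simp
          thus ?thesis using True unfolding S_def by simp
        next
          case False
          hence "x \<notin> ?U" by simp
          thus ?thesis using permutes_not_in[OF p] permutes_not_in[OF p0] by metis
        qed
        hence "p = p0" by (rule ext)
        with ne show False by simp
      qed
      have fS: "finite S" unfolding S_def by auto
      let ?K = "(\<lambda>i. w (p0 i)) ` S"
      have fK: "finite ?K" using fS by simp
      have "Max ?K \<in> ?K" using fK \<open>S \<noteq> {}\<close> by (intro Max_in) auto
      then obtain i0 where i0: "i0 \<in> S" and i0M: "w (p0 i0) = Max ?K" by auto
      have mx: "\<And>i. i \<in> S \<Longrightarrow> w (p0 i) \<le> w (p0 i0)"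
        unfolding i0M using fK by (intro Max_ge) auto
      have i0m: "i0 < m" using i0 unfolding S_def by auto
      have pm: "p0 i0 < m" using permutes_in_image[OF p0] i0m by auto
      define i1 where "i1 = Hilbert_Choice.inv p (p0 i0)"
      have pi1: "p i1 = p0 i0" unfolding i1_def using permutes_inverses(1)[OF p] by simp
      have i1m: "i1 < m" unfolding i1_def using permutes_in_image[OF permutes_inv[OF p]] pm by auto
      have i1S: "i1 \<in> S"
      proof (rule ccontr)
        assume "i1 \<notin> S"
        hence "p0 i1 = p0 i0" using i1m pi1 unfolding S_def by auto
        hence "i1 = i0" using permutes_inj[OF p0] by (meson injD)
        with \<open>i1 \<notin> S\<close> i0 show False by simp
      qed
      have "A $$ (i1, p i1) \<noteq> 0" using nz i1m .
      have l1: "w (p i1) \<le> w (p0 i1)" using le[OF i1m _ \<open>A $$ (i1, p i1) \<noteq> 0\<close>] pi1 pm by auto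
      have "w (p i1) \<noteq> w (p0 i1)"
      proof
        assume "w (p i1) = w (p0 i1)"
        hence "p i1 = p0 i1" using eq[OF i1m _ \<open>A $$ (i1, p i1) \<noteq> 0\<close>] pi1 pm by auto
        thus False using i1S unfolding S_def by auto
      qed
      with l1 have "w (p0 i0) < w (p0 i1)" using pi1 by auto
      with mx[OF i1S] show False by auto
    qed
    then have "(\<Prod> i = 0 ..< m. A $$ (i, p i)) = 0" by (rule prod_zero[rotated]) auto
    thus ?thesis by simp
  qed
  have fPU: "finite ?PU" by (rule finite_permutations) simp
  have "det A = (\<Sum> p \<in> ?PU. ?pp p)" unfolding det_def'[OF A] ..
  also have "\<dots> = ?pp p0 + (\<Sum> p \<in> ?PU - {p0}. ?pp p)"
    by (rule sum.remove, insert fPU p0, auto)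
  also have "(\<Sum> p \<in> ?PU - {p0}. ?pp p) = 0"
    by (rule sum.neutral, insert zero, auto)
  finally show ?thesis by simp
qed

locale cfg =
  fixes n :: nat and j d :: "nat \<Rightarrow> nat"
  assumes n2: "n \<ge> 2"
    and jr: "\<And>i. i \<in> {1..n-1} \<Longrightarrow> j i \<in> {1..n}"
    and jinj: "inj_on j {1..n-1}"
    and dpos: "\<And>i. i \<in> {1..n-1} \<Longrightarrow> j i < i \<Longrightarrow> d i > 0"
begin

definition jj :: "nat \<Rightarrow> nat" where "jj x = (if 1 \<le> x \<and> x \<le> n-1 then j x else x)"
definition orb :: "nat \<Rightarrow> nat set" where "orb x = range (\<lambda>k. (jj ^^ k) x)"
definition RR :: "nat set" where
  "RR = {i. 1 \<le> i \<and> i \<le> n-1 \<and> n \<notin> orb i \<and> (\<forall>y\<in>orb i. y \<le> i) \<and> \<not>(j i = i \<and> d i = 0)}"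
definition TT :: "nat set" where "TT = insert n RR"
definition nxt :: "nat \<Rightarrow> nat" where "nxt i = Min {y \<in> TT. i < y}"
definition dst :: "nat \<Rightarrow> nat" where "dst x = (LEAST k. (jj ^^ k) x \<in> TT)"
definition trm :: "nat \<Rightarrow> nat" where "trm x = (jj ^^ dst x) x"

lemma jj_range: "x \<in> {1..n} \<Longrightarrow> jj x \<in> {1..n}"
  using jr[of x] unfolding jj_def by auto

lemma iter_range: "x \<in> {1..n} \<Longrightarrow> (jj ^^ k) x \<in> {1..n}"
proof (induction k)
  case 0 thus ?case by simp
next
  case (Suc k) thus ?case using jj_range[of "(jj ^^ k) x"] by simp
qed

lemma orb_sub: "x \<in> {1..n} \<Longrightarrow> orb x \<subseteq> {1..n}"
  unfolding orb_def using iter_range by auto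

lemma self_orb: "x \<in> orb x"
  unfolding orb_def by (auto intro: range_eqI[where x=0])

lemma orb_trans: "y \<in> orb x \<Longrightarrow> orb y \<subseteq> orb x"
  unfolding orb_def by (auto, metis funpow_add comp_apply rangeI)

lemma jj_orb: "jj x \<in> orb x"
  unfolding orb_def by (auto intro: range_eqI[where x=1])

lemma jj_inj: "x \<in> {1..n-1} \<Longrightarrow> y \<in> {1..n-1} \<Longrightarrow> jj x = jj y \<Longrightarrow> x = y"
  using jinj unfolding jj_def by (auto dest: inj_onD)

lemma orb_sub1: "x \<in> {1..n} \<Longrightarrow> n \<notin> orb x \<Longrightarrow> orb x \<subseteq> {1..n-1}"
proof
  fix y assume "x \<in> {1..n}" "n \<notin> orb x" "y \<in> orb x"
  hence "y \<in> {1..n}" "y \<noteq> n" using orb_sub[of x] by auto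
  thus "y \<in> {1..n-1}" by auto
qed

lemma cancel:
  assumes "x \<in> {1..n}" "n \<notin> orb x" "(jj ^^ a) x = (jj ^^ (a + c)) x"
  shows "x = (jj ^^ c) x"
  using assms(3)
proof (induction a)
  case 0 thus ?case by simp
next
  case (Suc a)
  have s: "orb x \<subseteq> {1..n-1}" using orb_sub1 assms(1,2) .
  have "(jj ^^ a) x \<in> orb x" "(jj ^^ (a + c)) x \<in> orb x" unfolding orb_def by auto
  hence "(jj ^^ a) x \<in> {1..n-1}" "(jj ^^ (a + c)) x \<in> {1..n-1}" using s by auto
  moreover have "jj ((jj ^^ a) x) = jj ((jj ^^ (a + c)) x)" using Suc.prems by simp
  ultimately have "(jj ^^ a) x = (jj ^^ (a + c)) x" using jj_inj by blast
  thus ?case using Suc.IH by simp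
qed

lemma period:
  assumes "x \<in> {1..n}" "n \<notin> orb x"
  shows "\<exists>p\<ge>1. (jj ^^ p) x = x"
proof -
  have s: "orb x \<subseteq> {1..n}" using orb_sub assms(1) .
  have "\<not> inj_on (\<lambda>k. (jj ^^ k) x) {0..n}"
  proof
    assume "inj_on (\<lambda>k. (jj ^^ k) x) {0..n}"
    moreover have "(\<lambda>k. (jj ^^ k) x) ` {0..n} \<subseteq> {1..n}" using s unfolding orb_def by auto
    ultimately have "card {0..n} \<le> card {1..n}" by (intro card_inj_on_le) auto
    thus False by simp
  qed
  then obtain a b where ab: "a \<noteq> b" "(jj ^^ a) x = (jj ^^ b) x" unfolding inj_on_def by auto
  show ?thesis
  proof (cases "a < b")
    case True
    with ab cancel[OF assms, of a "b - a"] show ?thesis by (intro exI[of _ "b-a"]) auto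
  next
    case False
    with ab cancel[OF assms, of b "a - b"] show ?thesis by (intro exI[of _ "a-b"]) auto
  qed
qed

lemma period_mult: "(jj ^^ p) x = x \<Longrightarrow> (jj ^^ (p * m)) x = x"
  by (induction m) (auto simp: funpow_add[unfolded o_def])

lemma cyc:
  assumes "x \<in> {1..n}" "n \<notin> orb x" "y \<in> orb x"
  shows "x \<in> orb y"
proof -
  obtain p where p: "p \<ge> 1" "(jj ^^ p) x = x" using period[OF assms(1,2)] by auto
  obtain c where y: "y = (jj ^^ c) x" using assms(3) unfolding orb_def by auto
  have "p * c \<ge> c" using p by simp
  hence "(jj ^^ (p * c - c)) y = (jj ^^ (p * c)) x"
    unfolding y using funpow_add[of "p*c-c" c jj] by simp
  also have "\<dots> = x" using period_mult[OF p(2)] .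
  finally show ?thesis unfolding orb_def by (auto intro: range_eqI[symmetric])
qed

end

context cfg begin

lemma finite_RR: "finite RR" unfolding RR_def by (rule finite_subset[of _ "{1..n-1}"]) auto
lemma finite_TT: "finite TT" unfolding TT_def using finite_RR by simp

lemma RR_props:
  assumes "i \<in> RR"
  shows "1 \<le> i" "i \<le> n-1" "jj i = j i" "j i \<le> i" "d i > 0" "n \<notin> orb i" "\<And>y. y \<in> orb i \<Longrightarrow> y \<le> i"
proof -
  show i1: "1 \<le> i" "i \<le> n-1" "n \<notin> orb i" "\<And>y. y \<in> orb i \<Longrightarrow> y \<le> i"
    using assms unfolding RR_def by auto
  show jji: "jj i = j i" using i1 unfolding jj_def by auto
  show ji: "j i \<le> i" using jj_orb[of i] i1(4) jji by auto
  show "d i > 0"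
  proof (cases "j i = i")
    case True thus ?thesis using assms unfolding RR_def by auto
  next
    case False thus ?thesis using dpos[of i] i1 ji by auto
  qed
qed

lemma TT_sub: "TT \<subseteq> {1..n}"
proof
  fix y assume "y \<in> TT"
  thus "y \<in> {1..n}" unfolding TT_def using RR_props(1,2)[of y] n2 by auto
qed

lemma E0: "i \<in> {1..n-1} \<Longrightarrow> i \<notin> RR \<Longrightarrow> j i = i \<Longrightarrow> d i = 0"
proof (rule ccontr)
  assume a: "i \<in> {1..n-1}" "i \<notin> RR" "j i = i" "d i \<noteq> 0"
  have jji: "jj i = i" using a unfolding jj_def by auto
  have "(jj ^^ k) i = i" for k by (induction k) (auto simp: jji)
  hence "orb i = {i}" unfolding orb_def by auto
  hence "i \<in> RR" using a n2 unfolding RR_def by auto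
  with a show False by simp
qed

lemma reach:
  assumes x: "x \<in> {1..n}" and ne: "\<not>(x \<le> n-1 \<and> j x = x \<and> d x = 0)"
  shows "\<exists>k. (jj ^^ k) x \<in> TT"
proof (cases "n \<in> orb x")
  case True then obtain k where "(jj ^^ k) x = n" unfolding orb_def by (auto simp: eq_commute)
  thus ?thesis unfolding TT_def by auto
next
  case False
  have s: "orb x \<subseteq> {1..n-1}" using orb_sub1[OF x False] .
  have fin: "finite (orb x)" using s finite_subset by blast
  define m where "m = Max (orb x)"
  have mo: "m \<in> orb x" unfolding m_def using fin self_orb[of x] by (intro Max_in) auto
  have mge: "\<And>y. y \<in> orb x \<Longrightarrow> y \<le> m" unfolding m_def using fin by auto
  have om: "orb m \<subseteq> orb x" using orb_trans[OF mo] .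
  have m1: "m \<in> {1..n-1}" using mo s by auto
  have "m \<in> RR"
  proof -
    have "\<not>(j m = m \<and> d m = 0)"
    proof
      assume E: "j m = m \<and> d m = 0"
      have jjm: "jj m = m" using E m1 unfolding jj_def by auto
      have "(jj ^^ k) m = m" for k by (induction k) (auto simp: jjm)
      hence "orb m = {m}" unfolding orb_def by auto
      moreover have "x \<in> orb m" using cyc[OF x False mo] .
      ultimately have "x = m" by auto
      with E m1 ne show False by auto
    qed
    thus ?thesis using m1 om False mge unfolding RR_def by auto
  qed
  then obtain k where "(jj ^^ k) x = m" using mo unfolding orb_def by auto
  thus ?thesis using \<open>m \<in> RR\<close> unfolding TT_def by auto
qed

lemma nxt_props:
  assumes "i \<in> RR"
  shows "nxt i \<in> TT" "i < nxt i" "\<And>y. y \<in> TT \<Longrightarrow> i < y \<Longrightarrow> nxt i \<le> y"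
proof -
  have ne: "{y \<in> TT. i < y} \<noteq> {}" using RR_props(2)[OF assms] n2 unfolding TT_def by auto
  have f: "finite {y \<in> TT. i < y}" using finite_TT by simp
  have "nxt i \<in> {y \<in> TT. i < y}" unfolding nxt_def using Min_in[OF f ne] .
  thus "nxt i \<in> TT" "i < nxt i" by auto
  show "\<And>y. y \<in> TT \<Longrightarrow> i < y \<Longrightarrow> nxt i \<le> y" unfolding nxt_def using f by auto
qed

lemma TT_dst: "y \<in> TT \<Longrightarrow> dst y = 0 \<and> trm y = y"
  unfolding dst_def trm_def by (auto intro: Least_eq_0)

lemma trm_in: "\<exists>k. (jj ^^ k) x \<in> TT \<Longrightarrow> trm x \<in> TT \<and> trm x \<in> orb x"
  unfolding trm_def dst_def orb_def by (auto intro: LeastI_ex)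

lemma trm_j:
  assumes i: "i \<in> RR"
  shows "trm (j i) = i"
proof -
  note P = RR_props[OF i]
  have i1: "i \<in> {1..n}" using P by auto
  have jo: "j i \<in> orb i" using jj_orb[of i] P(3) by simp
  have ex: "\<exists>k. (jj ^^ k) (j i) \<in> TT"
  proof -
    have "i \<in> orb (j i)" using cyc[OF i1 P(6) jo] .
    then obtain k where "(jj ^^ k) (j i) = i" unfolding orb_def by (auto simp: eq_commute)
    thus ?thesis using i unfolding TT_def by (intro exI[of _ k]) auto
  qed
  from trm_in[OF ex] have t: "trm (j i) \<in> TT" "trm (j i) \<in> orb (j i)" by auto
  have to: "trm (j i) \<in> orb i" using t(2) orb_trans[OF jo] by auto
  have "trm (j i) \<noteq> n" using to P(6) by auto
  hence tR: "trm (j i) \<in> RR" using t(1) unfolding TT_def by auto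
  have le1: "trm (j i) \<le> i" using P(7) to by auto
  have "i \<in> orb (trm (j i))" using cyc[OF i1 P(6) to] .
  hence "i \<le> trm (j i)" using RR_props(7)[OF tR] by auto
  with le1 show ?thesis by simp
qed

lemma dst_step:
  assumes x: "x \<in> {1..n-1}" and nt: "x \<notin> TT" and ex: "\<exists>k. (jj ^^ k) x \<in> TT"
  shows "trm (j x) = trm x \<and> dst (j x) < dst x"
proof -
  have jjx: "jj x = j x" using x unfolding jj_def by auto
  obtain k where k: "(jj ^^ k) x \<in> TT" using ex by auto
  have "\<not> (jj ^^ 0) x \<in> TT" using nt by simp
  have ds: "dst x = Suc (LEAST m. (jj ^^ Suc m) x \<in> TT)"
    unfolding dst_def by (rule Least_Suc[where P="\<lambda>k. (jj ^^ k) x \<in> TT", OF k]) (use nt in simp)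
  have eq: "\<And>m. (jj ^^ Suc m) x = (jj ^^ m) (j x)" unfolding jjx[symmetric] funpow_Suc_right by simp
  have dj: "dst (j x) = (LEAST m. (jj ^^ Suc m) x \<in> TT)" unfolding dst_def eq ..
  show ?thesis unfolding trm_def using ds dj eq by simp
qed

end

context cfg begin

definition q :: nat where "q = Min TT"
definition mu :: "nat \<Rightarrow> nat" where "mu i = (if i \<in> RR then nxt i else i)"
definition ent :: "nat \<Rightarrow> nat \<Rightarrow> 'a::field poly" where
  "ent i k = (if k = j i then monom 1 (d i) else 0) + (if k = i \<and> (j i \<noteq> i \<or> d i > 0) then 1 else 0)
     + (if i \<in> RR \<and> k = nxt i then 1 else 0)"
definition w :: "nat \<Rightarrow> nat \<times> nat" where "w k = (trm k, dst k)"

lemma q_TT: "q \<in> TT" unfolding q_def using finite_TT by (intro Min_in) (auto simp: TT_def)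
lemma q_le: "y \<in> TT \<Longrightarrow> q \<le> y" unfolding q_def using finite_TT by auto

lemma nxt_ne: "i \<in> RR \<Longrightarrow> nxt i \<noteq> j i \<and> nxt i \<noteq> i \<and> j i < nxt i"
  using nxt_props(2)[of i] RR_props(4)[of i] by auto

lemma ent_j: "ent i (j i) = monom 1 (d i) + (if j i = i \<and> d i > 0 then 1 else 0)"
  unfolding ent_def using nxt_ne[of i] by auto

lemma ent_nj: "k \<noteq> j i \<Longrightarrow> ent i k = (if k = i \<or> (i \<in> RR \<and> k = nxt i) then 1 else 0)"
  unfolding ent_def using nxt_ne[of i] by auto

lemma ent_nz: "ent i k \<noteq> 0 \<Longrightarrow> k = j i \<or> k = i \<or> (i \<in> RR \<and> k = nxt i)"
  unfolding ent_def by (auto split: if_splits)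

lemma mu_props:
  assumes i: "i \<in> {1..n-1}"
  shows "mu i \<in> {1..n}" "mu i \<noteq> q" "ent i (mu i) = 1"
proof -
  show "mu i \<in> {1..n}"
    using i nxt_props(1)[of i] TT_sub unfolding mu_def by auto
  show "mu i \<noteq> q"
  proof (cases "i \<in> RR")
    case True
    have "q \<le> i" using q_le True unfolding TT_def by auto
    thus ?thesis using True nxt_props(2)[OF True] unfolding mu_def by auto
  next
    case False
    have "i \<notin> TT" using False i unfolding TT_def by auto
    thus ?thesis using q_TT False unfolding mu_def by auto
  qed
  show "ent i (mu i) = 1"
  proof (cases "i \<in> RR")
    case True
    thus ?thesis unfolding mu_def using ent_nj[of "nxt i" i] nxt_ne[OF True] by auto
  next
    case False
    show ?thesis
    proof (cases "j i = i")
      case True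
      hence "d i = 0" using E0 i False by auto
      thus ?thesis using ent_j[of i] True False unfolding mu_def by simp
    next
      case F2: False
      thus ?thesis using ent_nj[of i i] False unfolding mu_def by auto
    qed
  qed
qed

lemma mu_inj: "inj_on mu {1..n-1}"
proof (rule inj_onI)
  fix x y assume x: "x \<in> {1..n-1}" and y: "y \<in> {1..n-1}" and e: "mu x = mu y"
  show "x = y"
  proof (cases "x \<in> RR"; cases "y \<in> RR")
    assume xr: "x \<in> RR" and yr: "y \<in> RR"
    show ?thesis
    proof (rule ccontr)
      assume "x \<noteq> y"
      hence "x < y \<or> y < x" by auto
      thus False
      proof
        assume "x < y"
        hence "nxt x \<le> y" using nxt_props(3)[OF xr, of y] yr unfolding TT_def by auto
        thus False using e nxt_props(2)[OF yr] xr yr unfolding mu_def by auto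
      next
        assume "y < x"
        hence "nxt y \<le> x" using nxt_props(3)[OF yr, of x] xr unfolding TT_def by auto
        thus False using e nxt_props(2)[OF xr] xr yr unfolding mu_def by auto
      qed
    qed
  next
    assume xr: "x \<in> RR" and yr: "y \<notin> RR"
    have "y \<notin> TT" using y yr unfolding TT_def by auto
    thus ?thesis using e nxt_props(1)[OF xr] xr yr unfolding mu_def by auto
  next
    assume xr: "x \<notin> RR" and yr: "y \<in> RR"
    have "x \<notin> TT" using x xr unfolding TT_def by auto
    thus ?thesis using e nxt_props(1)[OF yr] xr yr unfolding mu_def by auto
  next
    assume "x \<notin> RR" "y \<notin> RR" thus ?thesis using e unfolding mu_def by auto
  qed
qed

lemma weight:
  assumes i: "i \<in> {1..n-1}" and nz: "ent i k \<noteq> 0"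
  shows "w k \<le> w (mu i) \<and> (w k = w (mu i) \<longrightarrow> k = mu i)"
proof (cases "k = mu i")
  case True thus ?thesis by simp
next
  case kne: False
  have "w k < w (mu i)"
  proof (cases "i \<in> RR")
    case True
    have mi: "mu i = nxt i" using True unfolding mu_def by simp
    have wm: "w (mu i) = (nxt i, 0)" using TT_dst[OF nxt_props(1)[OF True]] unfolding mi w_def by simp
    have lt: "i < nxt i" using nxt_props(2)[OF True] .
    from ent_nz[OF nz] kne mi have "k = j i \<or> k = i" by auto
    thus ?thesis
    proof
      assume k: "k = i"
      have "w k = (i, 0)" using TT_dst[of i] True unfolding k w_def TT_def by auto
      thus ?thesis using wm lt by simp
    next
      assume k: "k = j i"
      show ?thesis
      proof (cases "j i = i")
        case True
        have "w k = (i, 0)" using TT_dst[of i] \<open>i \<in> RR\<close> True unfolding k w_def TT_def by auto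
        thus ?thesis using wm lt by simp
      next
        case False
        have "trm k = i" using trm_j[OF \<open>i \<in> RR\<close>] k by simp
        thus ?thesis using wm lt unfolding w_def by simp
      qed
    qed
  next
    case False
    have mi: "mu i = i" using False unfolding mu_def by simp
    from ent_nz[OF nz] kne mi False have k: "k = j i" by auto
    have ji: "j i \<noteq> i" using kne k mi by simp
    have nt: "i \<notin> TT" using False i unfolding TT_def by auto
    have ex: "\<exists>k. (jj ^^ k) i \<in> TT" using reach[of i] i ji by auto
    from dst_step[OF i nt ex] show ?thesis unfolding w_def k mi by simp
  qed
  thus ?thesis by auto
qed

end

context cfg begin

definition MM :: "'a::field poly mat" where "MM = mat (n-1) n (\<lambda>(a,b). ent (a+1) (b+1))"
definition q0 :: nat where "q0 = q - 1"
definition JJ :: "nat set" where "JJ = {..<n} - {q0}"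
definition col :: "nat \<Rightarrow> nat" where "col b = (if b < q0 then b else Suc b)"
definition cinv :: "nat \<Rightarrow> nat" where "cinv c = (if c < q0 then c else c - 1)"

lemma q_range: "q \<in> {1..n}" using q_TT TT_sub by auto

lemma q0_lt: "q0 < n" and q0_q: "q = q0 + 1"
  using q_range unfolding q0_def by auto

lemma card_JJ: "card JJ = n - 1" unfolding JJ_def using q0_lt by (simp add: card_Diff_singleton)

lemma colinv: "c \<in> JJ \<Longrightarrow> col (cinv c) = c \<and> cinv c < n - 1"
  unfolding JJ_def col_def cinv_def using q0_lt by auto

lemma colJ: "b < n - 1 \<Longrightarrow> col b \<in> JJ \<and> cinv (col b) = b"
  unfolding JJ_def col_def cinv_def using q0_lt by auto

lemma card_below: "c \<in> JJ \<Longrightarrow> card {a \<in> JJ. a < c} = cinv c"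
proof -
  assume c: "c \<in> JJ"
  have e: "{a \<in> JJ. a < c} = {..<c} - {q0}" using c unfolding JJ_def by auto
  show ?thesis
  proof (cases "c < q0")
    case True
    hence "{..<c} - {q0} = {..<c}" by auto
    thus ?thesis using True e unfolding cinv_def by simp
  next
    case False
    hence "q0 \<in> {..<c}" using c unfolding JJ_def by auto
    thus ?thesis using False e unfolding cinv_def by (simp add: card_Diff_singleton)
  qed
qed

lemma pick_JJ: "b < n - 1 \<Longrightarrow> pick JJ b = col b"
  using pick_card_in_set[of "col b" JJ] card_below[of "col b"] colJ[of b] by simp

lemma pick_rows: "a < n - 1 \<Longrightarrow> pick {..<n-1} a = a"
proof -
  assume a: "a < n - 1"
  have "{x \<in> {..<n-1}. x < a} = {..<a}" using a by auto
  hence "card {x \<in> {..<n-1}. x < a} = a" by simp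
  thus ?thesis using pick_card_in_set[of a "{..<n-1}"] a by simp
qed

definition BB :: "'a::field poly mat" where "BB = submatrix MM {..<n-1} JJ"

lemma BB_carrier: "BB \<in> carrier_mat (n-1) (n-1)"
proof -
  have "{i. i < n - 1 \<and> i \<in> {..<n-1}} = {..<n-1}" by auto
  moreover have "{i. i < n \<and> i \<in> JJ} = JJ" unfolding JJ_def by auto
  ultimately show ?thesis unfolding BB_def carrier_mat_def using card_JJ
    by (simp add: dim_submatrix MM_def)
qed

lemma BB_index: "a < n - 1 \<Longrightarrow> b < n - 1 \<Longrightarrow> BB $$ (a,b) = ent (a+1) (col b + 1)"
proof -
  assume a: "a < n - 1" and b: "b < n - 1"
  have e1: "{i. i < dim_row MM \<and> i \<in> {..<n-1}} = {..<n-1}" unfolding MM_def by auto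
  have e2: "{i. i < dim_col MM \<and> i \<in> JJ} = JJ" unfolding JJ_def MM_def by auto
  have c1: "a < card {i. i < dim_row MM \<and> i \<in> {..<n-1}}" unfolding e1 using a by simp
  have c2: "b < card {i. i < dim_col MM \<and> i \<in> JJ}" unfolding e2 card_JJ using b .
  have "BB $$ (a,b) = MM $$ (pick {..<n-1} a, pick JJ b)"
    unfolding BB_def by (rule submatrix_index[OF c1 c2])
  also have "\<dots> = MM $$ (a, col b)" using pick_rows[OF a] pick_JJ[OF b] by simp
  also have "\<dots> = ent (a+1) (col b + 1)"
  proof -
    have cb: "col b < n" using colJ[OF b] unfolding JJ_def by blast
    show ?thesis unfolding MM_def using a cb by simp
  qed
  finally show ?thesis .
qed

end

context cfg begin

definition pp :: "nat \<Rightarrow> nat" where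
  "pp a = (if a < n - 1 then cinv (mu (a+1) - 1) else a)"

lemma pp_props:
  assumes a: "a < n - 1"
  shows "pp a < n - 1" "col (pp a) + 1 = mu (a+1)"
proof -
  have i: "a + 1 \<in> {1..n-1}" using a by auto
  have m: "mu (a+1) - 1 \<in> JJ" using mu_props(1,2)[OF i] q0_q unfolding JJ_def by auto
  have "mu (a+1) \<ge> 1" using mu_props(1)[OF i] by auto
  thus "pp a < n - 1" "col (pp a) + 1 = mu (a+1)" using colinv[OF m] a unfolding pp_def by auto
qed

lemma pp_perm: "pp permutes {0..<n-1}"
proof (rule bij_imp_permutes)
  have inj: "inj_on pp {0..<n-1}"
  proof (rule inj_onI)
    fix x y assume x: "x \<in> {0..<n-1}" and y: "y \<in> {0..<n-1}" and e: "pp x = pp y"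
    have "mu (x+1) = mu (y+1)" using pp_props(2)[of x] pp_props(2)[of y] x y e by auto
    moreover have "x + 1 \<in> {1..n-1}" "y + 1 \<in> {1..n-1}" using x y by auto
    ultimately have "x + 1 = y + 1" using mu_inj by (meson inj_onD)
    thus "x = y" by simp
  qed
  have sub: "pp ` {0..<n-1} \<subseteq> {0..<n-1}" using pp_props(1) by auto
  show "bij_betw pp {0..<n-1} {0..<n-1}"
    unfolding bij_betw_def using inj endo_inj_surj[OF _ sub inj] by auto
  show "\<And>x. x \<notin> {0..<n-1} \<Longrightarrow> pp x = x" unfolding pp_def by auto
qed

lemma det_BB: "det (BB :: 'a::field poly mat) = signof pp"
proof -
  have "det (BB :: 'a poly mat) = signof pp * (\<Prod>i = 0..<n-1. BB $$ (i, pp i))"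
  proof (rule det_single_perm[OF BB_carrier pp_perm, where w = "\<lambda>b. w (col b + 1)"])
    fix i k assume i: "i < n - 1" and k: "k < n - 1" and nz: "(BB :: 'a poly mat) $$ (i, k) \<noteq> 0"
    have i1: "i + 1 \<in> {1..n-1}" using i by auto
    have bi: "(BB :: 'a poly mat) $$ (i,k) = ent (i+1) (col k + 1)" by (rule BB_index[OF i k])
    have "ent (i+1) (col k + 1) \<noteq> (0 :: 'a poly)" using nz unfolding bi .
    from weight[OF i1 this] pp_props[OF i]
    have W: "w (col k + 1) \<le> w (col (pp i) + 1) \<and> (w (col k + 1) = w (col (pp i) + 1) \<longrightarrow> col k + 1 = col (pp i) + 1)"
      by simp
    thus "w (col k + 1) \<le> w (col (pp i) + 1)" by simp
    assume "w (col k + 1) = w (col (pp i) + 1)"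
    with W have "col k = col (pp i)" by simp
    hence "cinv (col k) = cinv (col (pp i))" by simp
    thus "k = pp i" using colJ[OF k] colJ[OF pp_props(1)[OF i]] by simp
  qed
  also have "(\<Prod>i = 0..<n-1. (BB :: 'a poly mat) $$ (i, pp i)) = 1"
  proof (rule prod.neutral, rule ballI)
    fix i assume "i \<in> {0..<n-1}"
    hence i: "i < n - 1" by simp
    have i1: "i + 1 \<in> {1..n-1}" using i by auto
    have bi: "(BB :: 'a poly mat) $$ (i, pp i) = ent (i+1) (col (pp i) + 1)" by (rule BB_index[OF i pp_props(1)[OF i]])
    show "(BB :: 'a poly mat) $$ (i, pp i) = 1"
      unfolding bi pp_props(2)[OF i] by (rule mu_props(3)[OF i1])
  qed
  finally show ?thesis by simp
qed

lemma basic: "basic_mat (MM :: 'a::field poly mat)"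
proof -
  let ?M = "MM :: 'a poly mat"
  have dc: "dim_col ?M = n" and dr: "dim_row ?M = n - 1"
    unfolding MM_def by simp_all
  have j1: "JJ \<subseteq> {..<dim_col ?M}" unfolding dc JJ_def by blast
  have j2: "card JJ = dim_row ?M" unfolding dr by (rule card_JJ)
  have "p dvd 1" if H: "\<forall>J. J \<subseteq> {..<dim_col ?M} \<and> card J = dim_row ?M \<longrightarrow> p dvd det (submatrix ?M {..<dim_row ?M} J)" for p :: "'a poly"
  proof -
    have "p dvd det (submatrix ?M {..<dim_row ?M} JJ)" using H j1 j2 by blast
    hence "p dvd det (BB :: 'a poly mat)" unfolding BB_def dr .
    hence "p dvd signof pp" unfolding det_BB .
    thus "p dvd 1" unfolding sign_def by (cases "evenperm pp") simp_all
  qed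
  thus ?thesis unfolding basic_mat_def by blast
qed

end

context cfg begin

lemma deg_jpiv: "degree (monom (1::'a::field) m + (if c then 1 else 0)) = m \<and> monom (1::'a) m + (if c then 1 else 0) \<noteq> 0"
  if "c \<Longrightarrow> m > 0" for m c
proof (cases c)
  case True
  hence m: "m > 0" using that by simp
  have "degree (monom (1::'a) m + 1) = m"
    using m by (subst degree_add_eq_left) (auto simp: degree_monom_eq)
  moreover have "monom (1::'a) m + 1 \<noteq> 0"
  proof
    assume "monom (1::'a) m + 1 = 0"
    hence "degree (monom (1::'a) m + 1) = 0" by simp
    with \<open>degree (monom (1::'a) m + 1) = m\<close> m show False by simp
  qed
  ultimately show ?thesis using True by simp
next
  case False thus ?thesis by (simp add: degree_monom_eq)
qed

lemma ent_conds:
  assumes i: "i \<in> {1..n-1}"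
  shows "\<forall>k\<in>{1..n}. k < j i \<longrightarrow> degree (ent i k :: 'a::field poly) \<le> d i"
    "(ent i (j i) :: 'a poly) \<noteq> 0" "degree (ent i (j i) :: 'a poly) = d i"
    "\<forall>k\<in>{1..n}. k > j i \<longrightarrow> (ent i k :: 'a poly) = 0 \<or> degree (ent i k :: 'a poly) < d i"
    "poly (ent i i :: 'a poly) 0 = 1"
    "\<forall>k\<in>{1..n}. k < i \<longrightarrow> poly (ent i k :: 'a poly) 0 = 0"
proof -
  have dp: "j i = i \<and> 0 < d i \<Longrightarrow> d i > 0" by simp
  note DJ = deg_jpiv[where m = "d i" and c = "j i = i \<and> 0 < d i", OF dp]
  show "(ent i (j i) :: 'a poly) \<noteq> 0" "degree (ent i (j i) :: 'a poly) = d i"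
    unfolding ent_j using DJ by auto
  show "\<forall>k\<in>{1..n}. k < j i \<longrightarrow> degree (ent i k :: 'a::field poly) \<le> d i"
  proof (intro ballI impI)
    fix k assume "k < j i"
    hence "k \<noteq> j i" by simp
    hence "(ent i k :: 'a::field poly) = (if k = i \<or> (i \<in> RR \<and> k = nxt i) then 1 else 0)" by (rule ent_nj)
    thus "degree (ent i k :: 'a::field poly) \<le> d i" by simp
  qed
  show "\<forall>k\<in>{1..n}. k > j i \<longrightarrow> (ent i k :: 'a poly) = 0 \<or> degree (ent i k :: 'a poly) < d i"
  proof (intro ballI impI)
    fix k assume k: "k \<in> {1..n}" "k > j i"
    have e: "(ent i k :: 'a poly) = (if k = i \<or> (i \<in> RR \<and> k = nxt i) then 1 else 0)"
      using ent_nj[of k i] k by auto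
    show "(ent i k :: 'a poly) = 0 \<or> degree (ent i k :: 'a poly) < d i"
    proof (cases "k = i \<or> (i \<in> RR \<and> k = nxt i)")
      case True
      have "d i > 0"
      proof (cases "i \<in> RR")
        case True thus ?thesis using RR_props(5) by blast
      next
        case False
        hence "k = i" using \<open>k = i \<or> (i \<in> RR \<and> k = nxt i)\<close> by auto
        thus ?thesis using dpos[OF i] k by auto
      qed
      thus ?thesis using e True by simp
    next
      case False
      have "(ent i k :: 'a poly) = 0" using e unfolding if_not_P[OF False] .
      thus ?thesis by simp
    qed
  qed
  show "poly (ent i i :: 'a poly) 0 = 1"
  proof (cases "j i = i")
    case True
    have "(ent i i :: 'a poly) = monom 1 (d i) + (if 0 < d i then 1 else 0)"
      using ent_j[of i] True by simp
    thus ?thesis by (cases "d i = 0") (auto simp: poly_monom)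
  next
    case False
    hence "(ent i i :: 'a poly) = (if i = i \<or> (i \<in> RR \<and> i = nxt i) then 1 else 0)" by (intro ent_nj) auto
    thus ?thesis by simp
  qed
  show "\<forall>k\<in>{1..n}. k < i \<longrightarrow> poly (ent i k :: 'a poly) 0 = 0"
  proof (intro ballI impI)
    fix k assume k: "k \<in> {1..n}" "k < i"
    show "poly (ent i k :: 'a poly) 0 = 0"
    proof (cases "k = j i")
      case True
      hence "d i > 0" using dpos[OF i] k by auto
      have "(ent i (j i) :: 'a poly) = monom 1 (d i) + (if j i = i \<and> d i > 0 then 1 else 0)" by (rule ent_j)
      thus ?thesis using \<open>d i > 0\<close> True k by (simp add: poly_monom)
    next
      case False
      have "\<not> (i \<in> RR \<and> k = nxt i)" using nxt_props(2)[of i] k by auto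
      have "(ent i k :: 'a poly) = (if k = i \<or> (i \<in> RR \<and> k = nxt i) then 1 else 0)" using False by (rule ent_nj)
      thus ?thesis using \<open>\<not> (i \<in> RR \<and> k = nxt i)\<close> k by simp
    qed
  qed
qed

lemma MM_index: "i \<in> {1..n-1} \<Longrightarrow> k \<in> {1..n} \<Longrightarrow> (MM :: 'a::field poly mat) $$ (i-1, k-1) = ent i k"
  unfolding MM_def by auto

lemma MM_carrier: "(MM :: 'a::field poly mat) \<in> carrier_mat (n-1) n"
  unfolding MM_def by simp

end

theorem theorem4p7:
  fixes n :: nat and j d :: "nat \<Rightarrow> nat"
  assumes "n \<ge> 2"
    and "\<And>i. i \<in> {1..n-1} \<Longrightarrow> j i \<in> {1..n}"
    and "inj_on j {1..n-1}"
    and "\<And>i. i \<in> {1..n-1} \<Longrightarrow> j i < i \<Longrightarrow> d i > 0"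
  shows "\<exists>M :: ('a::{field,finite}) poly mat.
           M \<in> carrier_mat (n-1) n \<and> basic_mat M \<and>
           (\<forall>i\<in>{1..n-1}.
              (\<forall>k\<in>{1..n}. k < j i \<longrightarrow> degree (M $$ (i-1, k-1)) \<le> d i) \<and>
              M $$ (i-1, j i - 1) \<noteq> 0 \<and> degree (M $$ (i-1, j i - 1)) = d i \<and>
              (\<forall>k\<in>{1..n}. k > j i \<longrightarrow>
                  M $$ (i-1, k-1) = 0 \<or> degree (M $$ (i-1, k-1)) < d i) \<and>
              poly (M $$ (i-1, i-1)) 0 = 1 \<and>
              (\<forall>k\<in>{1..n}. k < i \<longrightarrow> poly (M $$ (i-1, k-1)) 0 = 0))"
proof -
  interpret cfg n j d using assms by unfold_locales auto
  let ?M = "MM :: 'a poly mat"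
  have "\<forall>i\<in>{1..n-1}.
              (\<forall>k\<in>{1..n}. k < j i \<longrightarrow> degree (?M $$ (i-1, k-1)) \<le> d i) \<and>
              ?M $$ (i-1, j i - 1) \<noteq> 0 \<and> degree (?M $$ (i-1, j i - 1)) = d i \<and>
              (\<forall>k\<in>{1..n}. k > j i \<longrightarrow>
                  ?M $$ (i-1, k-1) = 0 \<or> degree (?M $$ (i-1, k-1)) < d i) \<and>
              poly (?M $$ (i-1, i-1)) 0 = 1 \<and>
              (\<forall>k\<in>{1..n}. k < i \<longrightarrow> poly (?M $$ (i-1, k-1)) 0 = 0)"
  proof
    fix i assume i: "i \<in> {1..n-1}"
    have ji: "j i \<in> {1..n}" using assms(2) i .
    have ii: "i \<in> {1..n}" using i by auto
    note C = ent_conds[OF i, where 'a = 'a]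
    show "(\<forall>k\<in>{1..n}. k < j i \<longrightarrow> degree (?M $$ (i-1, k-1)) \<le> d i) \<and>
              ?M $$ (i-1, j i - 1) \<noteq> 0 \<and> degree (?M $$ (i-1, j i - 1)) = d i \<and>
              (\<forall>k\<in>{1..n}. k > j i \<longrightarrow>
                  ?M $$ (i-1, k-1) = 0 \<or> degree (?M $$ (i-1, k-1)) < d i) \<and>
              poly (?M $$ (i-1, i-1)) 0 = 1 \<and>
              (\<forall>k\<in>{1..n}. k < i \<longrightarrow> poly (?M $$ (i-1, k-1)) 0 = 0)"
      using C MM_index[OF i, where 'a='a] MM_index[OF i ji, where 'a='a] MM_index[OF i ii, where 'a='a]
      by simp
  qed
  thus ?thesis using MM_carrier basic by blast
qed

end
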